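(* In the finite-horizon setting below, fix $(s,a)\in\mathcal{K}$ and a policy $\pi=(\pi_0,\dots,\pi_{H-1})$. Define $u^\pi,u^*\in\mathbb{R}^H$ by $u_h^\pi=(\widehat{P}_\mathcal{K}(\cdot|s,a)-P(\cdot|s,a))\widehat{V}^\pi_{h+1}$ and $u_h^*=(\widehat{P}_\mathcal{K}(\cdot|s,a)-P(\cdot|s,a))\widehat{V}^*_{h+1}$ for $h\in\{0,\dots,H-1\}$. Then for all $h\in\{0,\dots,H-1\}$: $$\widehat{Q}_h^\pi=\widetilde{Q}^\pi_{h,u^\pi},\quad\widehat{Q}_h^*=\widetilde{Q}^{\widehat{\pi}^*}_{h,u^*}=\widetilde{Q}^*_{h,u^*},\quad|u_h^\pi|\le H-h-1,\quad|u_h^*|\le H-h-1.$$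
   Context: A finite-horizon MDP $(\mathcal{S},\mathcal{A},P,(r_h)_{h<H},H)$ has finite $\mathcal{S},\mathcal{A}$, transition kernel $P$, horizon $H$ and step-dependent rewards $r_h$. For a nonstationary policy $\pi=(\pi_0,\dots,\pi_{H-1})$, $\pi_h:\mathcal{S}\to\mathcal{A}$: $V_H^\pi\equiv0$, $Q_h^\pi(s',a')=r_h(s',a')+\sum_{s''}P(s''|s',a')V_{h+1}^\pi(s'')$, $V_h^\pi(s')=Q_h^\pi(s',\pi_h(s'))$; optimal functions $V_h^*,Q_h^*$ are the maxima over policies, attained by an optimal policy. The true model $M$ has stationary reward $r\in[0,1]$ and $P(s'|s,a)=\sum_k\phi_k(s,a)\psi_k(s')$ with the anchor-state assumption: anchors $\mathcal{K}=\{(s_k,a_k)\}_{k=1}^K$, $\lambda_k^{s,a}\ge0$, $\sum_k\lambda_k^{s,a}=1$, $\phi(s,a)=\sum_k\lambda_k^{s,a}\phi(s_k,a_k)$. $\widehat{P}_\mathcal{K}(\cdot|s_k,a_k)$ is the empirical distribution of $N$ samples from $P(\cdot|s_k,a_k)$; $\widehat{M}$ has kernel $\widehat{P}(s'|s'',a'')=\sum_k\lambda_k^{s'',a''}\widehat{P}_\mathcal{K}(s'|s_k,a_k)$ and reward $r$ at every step; hats denote its value/Q-functions, $\widehat{\pi}^*$ is its optimal policy. Auxiliary model: for $(s,a)=(s_j,a_j)\in\mathcal{K}$ and $u=(u_0,\dots,u_{H-1})\in\mathbb{R}^H$, $\widetilde{M}_{s,a,u}$ has kernel $\widetilde{P}(s'|s'',a'')=\sum_k\lambda_k^{s'',a''}\widetilde{P}_\mathcal{K}(s'|s_k,a_k)$,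 with $\widetilde{P}_\mathcal{K}=\widehat{P}_\mathcal{K}$ on anchors $k\ne j$ and $\widetilde{P}_\mathcal{K}(\cdot|s_j,a_j)=P(\cdot|s,a)$, and step-$h$ reward $r+u_h\Lambda^{s,a}$ where $\Lambda^{s,a}(s'',a'')=\lambda_j^{s'',a''}$. $\widetilde{Q}^\pi_{h,u}$, $\widetilde{Q}^*_{h,u}$ denote its Q-functions at step $h$. *)

theory Defs
  imports Complex_Main
begin

function Vpi :: "('s::finite \<Rightarrow> 'a \<Rightarrow> 's \<Rightarrow> real) \<Rightarrow> (nat \<Rightarrow> 's \<Rightarrow> 'a \<Rightarrow> real) \<Rightarrow> nat
      \<Rightarrow> (nat \<Rightarrow> 's \<Rightarrow> 'a) \<Rightarrow> nat \<Rightarrow> 's \<Rightarrow> real" where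
  "Vpi Pk R H pol h s =
     (if h < H then R h s (pol h s) + (\<Sum>s''\<in>UNIV. Pk s (pol h s) s'' * Vpi Pk R H pol (Suc h) s'')
      else 0)"
  by pat_completeness auto
termination
  by (relation "measure (\<lambda>(Pk, R, H, pol, h, s). H - h)") auto

definition Qpi :: "('s::finite \<Rightarrow> 'a \<Rightarrow> 's \<Rightarrow> real) \<Rightarrow> (nat \<Rightarrow> 's \<Rightarrow> 'a \<Rightarrow> real) \<Rightarrow> nat
      \<Rightarrow> (nat \<Rightarrow> 's \<Rightarrow> 'a) \<Rightarrow> nat \<Rightarrow> 's \<Rightarrow> 'a \<Rightarrow> real" where
  "Qpi Pk R H pol h s a = R h s a + (\<Sum>s''\<in>UNIV. Pk s a s'' * Vpi Pk R H pol (Suc h) s'')"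

definition Vopt :: "('s::finite \<Rightarrow> 'a \<Rightarrow> 's \<Rightarrow> real) \<Rightarrow> (nat \<Rightarrow> 's \<Rightarrow> 'a \<Rightarrow> real) \<Rightarrow> nat
      \<Rightarrow> nat \<Rightarrow> 's \<Rightarrow> real" where
  "Vopt Pk R H h s = (SUP pol. Vpi Pk R H pol h s)"

definition Qopt :: "('s::finite \<Rightarrow> 'a \<Rightarrow> 's \<Rightarrow> real) \<Rightarrow> (nat \<Rightarrow> 's \<Rightarrow> 'a \<Rightarrow> real) \<Rightarrow> nat
      \<Rightarrow> nat \<Rightarrow> 's \<Rightarrow> 'a \<Rightarrow> real" where
  "Qopt Pk R H h s a = (SUP pol. Qpi Pk R H pol h s a)"

definition optimal_policy :: "('s::finite \<Rightarrow> 'a \<Rightarrow> 's \<Rightarrow> real) \<Rightarrow> (nat \<Rightarrow> 's \<Rightarrow> 'a \<Rightarrow> real) \<Rightarrow> nat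
      \<Rightarrow> (nat \<Rightarrow> 's \<Rightarrow> 'a) \<Rightarrow> bool" where
  "optimal_policy Pk R H pol \<longleftrightarrow> (\<forall>h<H. \<forall>s. Vpi Pk R H pol h s = Vopt Pk R H h s)"

definition anchor_kernel :: "nat \<Rightarrow> (nat \<Rightarrow> 's \<Rightarrow> 'a \<Rightarrow> real) \<Rightarrow> (nat \<Rightarrow> 's \<Rightarrow> real)
      \<Rightarrow> 's \<Rightarrow> 'a \<Rightarrow> 's \<Rightarrow> real" where
  "anchor_kernel K lam PK s'' a'' s' = (\<Sum>k<K. lam k s'' a'' * PK k s')"

definition empirical :: "nat \<Rightarrow> (nat \<Rightarrow> 's) \<Rightarrow> 's \<Rightarrow> real" where
  "empirical N samp s' = real (card {i. i < N \<and> samp i = s'}) / real N"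

end

theory Submission
  imports Defs
begin


lemma Vpi_lt: "h < H \<Longrightarrow> Vpi Pk R H pol h s = R h s (pol h s) + (\<Sum>s''\<in>UNIV. Pk s (pol h s) s'' * Vpi Pk R H pol (Suc h) s'')"
  by (subst Vpi.simps) simp

lemma Vpi_ge: "\<not> h < H \<Longrightarrow> Vpi Pk R H pol h s = 0"
  by (subst Vpi.simps) simp

declare Vpi.simps[simp del]

lemma Vpi_agree:
  "(\<And>h'. h' \<ge> h \<Longrightarrow> pol h' = pol' h') \<Longrightarrow> Vpi Pk R H pol h s = Vpi Pk R H pol' h s"
proof (induction "H - h" arbitrary: h s rule: less_induct)
  case less
  show ?case
  proof (cases "h < H")
    case True
    have "Vpi Pk R H pol (Suc h) s'' = Vpi Pk R H pol' (Suc h) s''" for s''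
      using less True by (intro less.hyps) auto
    then show ?thesis using True less.prems[of h] by (simp add: Vpi_lt)
  qed (simp add: Vpi_ge)
qed

lemma Vpi_bounds:
  fixes Pk :: "'s::finite \<Rightarrow> 'a \<Rightarrow> 's \<Rightarrow> real"
  assumes nn: "\<And>s a s'. Pk s a s' \<ge> 0" and sm: "\<And>s a. (\<Sum>s'\<in>UNIV. Pk s a s') = 1"
    and rr: "\<And>h s a. 0 \<le> R h s a \<and> R h s a \<le> 1"
  shows "0 \<le> Vpi Pk R H pol h s \<and> Vpi Pk R H pol h s \<le> real (H - h)"
proof (induction "H - h" arbitrary: h s rule: less_induct)
  case less
  show ?case
  proof (cases "h < H")
    case True
    have ih: "0 \<le> Vpi Pk R H pol (Suc h) s'' \<and> Vpi Pk R H pol (Suc h) s'' \<le> real (H - Suc h)" for s''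
      using True by (intro less.hyps) auto
    let ?b = "pol h s"
    have "(\<Sum>s''\<in>UNIV. Pk s ?b s'' * Vpi Pk R H pol (Suc h) s'') \<ge> 0"
      using ih nn by (intro sum_nonneg) simp
    moreover have "(\<Sum>s''\<in>UNIV. Pk s ?b s'' * Vpi Pk R H pol (Suc h) s'') \<le> (\<Sum>s''\<in>UNIV. Pk s ?b s'' * real (H - Suc h))"
      using ih nn by (intro sum_mono mult_left_mono) auto
    moreover have "(\<Sum>s''\<in>UNIV. Pk s ?b s'' * real (H - Suc h)) = real (H - Suc h)"
      using sm by (simp add: sum_distrib_right[symmetric])
    moreover have "real (H - h) = 1 + real (H - Suc h)" using True by simp
    ultimately show ?thesis using True rr[of h s ?b] by (simp add: Vpi_lt)
  qed (simp add: Vpi_ge)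
qed

lemma empirical_sum:
  assumes "N > 0" shows "(\<Sum>s'\<in>(UNIV::'s::finite set). empirical N samp s') = 1"
proof -
  have c: "real (card {i. i < N \<and> samp i = s'}) = (\<Sum>i<N. if samp i = s' then 1 else 0)" for s'
  proof -
    have "{i. i < N \<and> samp i = s'} = {i\<in>{..<N}. samp i = s'}" by auto
    then show ?thesis by (simp add: sum.If_cases Int_def)
  qed
  have "(\<Sum>s'\<in>(UNIV::'s set). real (card {i. i < N \<and> samp i = s'})) = (\<Sum>i<N. \<Sum>s'\<in>(UNIV::'s set). if samp i = s' then 1 else 0)"
    unfolding c by (rule sum.swap)
  also have "\<dots> = real N" by simp
  finally show ?thesis using assms unfolding empirical_def by (simp add: sum_divide_distrib[symmetric])
qed

lemma empirical_nonneg: "empirical N samp s' \<ge> 0"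
  unfolding empirical_def by simp


theorem lemma18:
  fixes P :: "'s::finite \<Rightarrow> 'a::finite \<Rightarrow> 's \<Rightarrow> real"
    and r :: "'s \<Rightarrow> 'a \<Rightarrow> real"
    and H K N j :: nat
    and \<phi> :: "'s \<Rightarrow> 'a \<Rightarrow> nat \<Rightarrow> real" and \<psi> :: "nat \<Rightarrow> 's \<Rightarrow> real"
    and sk :: "nat \<Rightarrow> 's" and ak :: "nat \<Rightarrow> 'a"
    and lam :: "nat \<Rightarrow> 's \<Rightarrow> 'a \<Rightarrow> real"
    and samp :: "nat \<Rightarrow> nat \<Rightarrow> 's"
    and pol pihat :: "nat \<Rightarrow> 's \<Rightarrow> 'a"
    and PhatK :: "nat \<Rightarrow> 's \<Rightarrow> real"
    and Phat Ptil :: "'s \<Rightarrow> 'a \<Rightarrow> 's \<Rightarrow> real"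
    and s :: 's and a :: 'a
    and Rtil :: "(nat \<Rightarrow> real) \<Rightarrow> nat \<Rightarrow> 's \<Rightarrow> 'a \<Rightarrow> real"
    and upi ustar :: "nat \<Rightarrow> real"
  assumes P_nonneg: "\<And>s a s'. P s a s' \<ge> 0"
    and P_sum: "\<And>s a. (\<Sum>s'\<in>UNIV. P s a s') = 1"
    and r_range: "\<And>s a. 0 \<le> r s a \<and> r s a \<le> 1"
    and lowrank: "\<And>s a s'. P s a s' = (\<Sum>k<K. \<phi> s a k * \<psi> k s')"
    and lam_nonneg: "\<And>k s a. k < K \<Longrightarrow> lam k s a \<ge> 0"
    and lam_sum: "\<And>s a. (\<Sum>k<K. lam k s a) = 1"
    and anchor: "\<And>s a i. i < K \<Longrightarrow> \<phi> s a i = (\<Sum>k<K. lam k s a * \<phi> (sk k) (ak k) i)"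
    and N_pos: "N > 0"
    and j_lt: "j < K"
    and pihat_opt: "optimal_policy Phat (\<lambda>h. r) H pihat"
    and PhatK_def: "PhatK = (\<lambda>k. empirical N (samp k))"
    and Phat_def: "Phat = anchor_kernel K lam PhatK"
    and s_def: "s = sk j" and a_def: "a = ak j"
    and Ptil_def: "Ptil = anchor_kernel K lam (\<lambda>k s'. if k = j then P s a s' else PhatK k s')"
    and Rtil_def: "Rtil = (\<lambda>u h s'' a''. r s'' a'' + u h * lam j s'' a'')"
    and upi_def: "upi = (\<lambda>h. \<Sum>s'\<in>UNIV. (PhatK j s' - P s a s') * Vpi Phat (\<lambda>h. r) H pol (Suc h) s')"
    and ustar_def: "ustar = (\<lambda>h. \<Sum>s'\<in>UNIV. (PhatK j s' - P s a s') * Vopt Phat (\<lambda>h. r) H (Suc h) s')"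
  shows "\<forall>h<H.
           Qpi Phat (\<lambda>h. r) H pol h = Qpi Ptil (Rtil upi) H pol h
         \<and> Qopt Phat (\<lambda>h. r) H h = Qpi Ptil (Rtil ustar) H pihat h
         \<and> Qpi Ptil (Rtil ustar) H pihat h = Qopt Ptil (Rtil ustar) H h
         \<and> \<bar>upi h\<bar> \<le> real H - real h - 1
         \<and> \<bar>ustar h\<bar> \<le> real H - real h - 1"
proof -
  define Rt where "Rt = Rtil ustar"
  let ?r = "(\<lambda>h::nat. r)"
  have PhK_nn: "PhatK k y \<ge> 0" for k y unfolding PhatK_def by (simp add: empirical_nonneg)
  have PhK_sum: "(\<Sum>y\<in>UNIV. PhatK k y) = 1" for k unfolding PhatK_def using N_pos by (simp add: empirical_sum)
  have Phat_nn: "Phat x b y \<ge> 0" for x b y unfolding Phat_def anchor_kernel_def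
    using lam_nonneg PhK_nn by (intro sum_nonneg) auto
  have Phat_sum: "(\<Sum>y\<in>UNIV. Phat x b y) = 1" for x b
  proof -
    have "(\<Sum>y\<in>UNIV. Phat x b y) = (\<Sum>k<K. lam k x b * (\<Sum>y\<in>UNIV. PhatK k y))"
      unfolding Phat_def anchor_kernel_def by (simp add: sum.swap[of _ "{..<K}"] sum_distrib_left)
    then show ?thesis using PhK_sum lam_sum by simp
  qed
  have Ptil_nn: "Ptil x b y \<ge> 0" for x b y unfolding Ptil_def anchor_kernel_def
    using lam_nonneg PhK_nn P_nonneg by (intro sum_nonneg) auto
  have pw: "Phat x b y = Ptil x b y + lam j x b * (PhatK j y - P s a y)" for x b y
  proof -
    have "Phat x b y = lam j x b * PhatK j y + (\<Sum>k\<in>{..<K}-{j}. lam k x b * PhatK k y)"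
      unfolding Phat_def anchor_kernel_def using j_lt by (simp add: sum.remove)
    moreover have "Ptil x b y = lam j x b * P s a y + (\<Sum>k\<in>{..<K}-{j}. lam k x b * PhatK k y)"
      unfolding Ptil_def anchor_kernel_def using j_lt by (simp add: sum.remove)
    ultimately show ?thesis by (simp add: algebra_simps)
  qed
  have key: "(\<Sum>y\<in>UNIV. Phat x b y * V y) = lam j x b * (\<Sum>y\<in>UNIV. (PhatK j y - P s a y) * V y) + (\<Sum>y\<in>UNIV. Ptil x b y * V y)"
    for x b and V :: "'s \<Rightarrow> real"
    proof -
    have "(\<Sum>y\<in>UNIV. Phat x b y * V y) = (\<Sum>y\<in>UNIV. Ptil x b y * V y + lam j x b * ((PhatK j y - P s a y) * V y))"
      unfolding pw by (intro sum.cong) (auto simp: algebra_simps)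
    then show ?thesis by (simp add: sum.distrib sum_distrib_left)
  qed
  define uof where "uof pl = (\<lambda>h. \<Sum>s'\<in>UNIV. (PhatK j s' - P s a s') * Vpi Phat ?r H pl (Suc h) s')" for pl
  have Vbnd: "0 \<le> Vpi Phat ?r H pl h x \<and> Vpi Phat ?r H pl h x \<le> real (H - h)" for pl h x
    by (rule Vpi_bounds) (use Phat_nn Phat_sum r_range in auto)
  have Veq: "Vpi Phat ?r H pl h x = Vpi Ptil (Rtil (uof pl)) H pl h x" for pl h x
  proof (induction "H - h" arbitrary: h x rule: less_induct)
    case less
    show ?case
    proof (cases "h < H")
      case True
      have ih: "Vpi Phat ?r H pl (Suc h) y = Vpi Ptil (Rtil (uof pl)) H pl (Suc h) y" for y
        using True by (intro less.hyps) auto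
      define b where "b = pl h x"
      have "Vpi Phat ?r H pl h x = r x b + lam j x b * uof pl h + (\<Sum>y\<in>UNIV. Ptil x b y * Vpi Phat ?r H pl (Suc h) y)"
        using True by (simp add: Vpi_lt key b_def uof_def)
      also have "\<dots> = r x b + lam j x b * uof pl h + (\<Sum>y\<in>UNIV. Ptil x b y * Vpi Ptil (Rtil (uof pl)) H pl (Suc h) y)"
        using ih by simp
      also have "\<dots> = Vpi Ptil (Rtil (uof pl)) H pl h x"
        using True by (simp add: Vpi_lt b_def Rtil_def)
      finally show ?thesis .
    qed (simp add: Vpi_ge)
  qed
  have Qeq: "Qpi Phat ?r H pl h = Qpi Ptil (Rtil (uof pl)) H pl h" for pl h
  proof (intro ext)
    fix x b
    have "Qpi Phat ?r H pl h x b = r x b + lam j x b * uof pl h + (\<Sum>y\<in>UNIV. Ptil x b y * Vpi Phat ?r H pl (Suc h) y)"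
      by (simp add: Qpi_def key uof_def)
    also have "\<dots> = Qpi Ptil (Rtil (uof pl)) H pl h x b"
    proof -
      have "Rtil (uof pl) h x b = r x b + lam j x b * uof pl h" by (simp add: Rtil_def)
      then show ?thesis by (simp add: Qpi_def Veq)
    qed
    finally show "Qpi Phat ?r H pl h x b = Qpi Ptil (Rtil (uof pl)) H pl h x b" .
  qed
  have Vopt_hat: "Vopt Phat ?r H h x = Vpi Phat ?r H pihat h x" for h x
  proof (cases "h < H")
    case True then show ?thesis using pihat_opt unfolding optimal_policy_def by simp
  next
    case False then show ?thesis unfolding Vopt_def by (simp add: Vpi_ge)
  qed
  have ustar_eq: "ustar = uof pihat" unfolding ustar_def uof_def Vopt_hat ..
  have Vle_hat: "Vpi Phat ?r H pl h x \<le> Vpi Phat ?r H pihat h x" for pl h x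
  proof -
    have "bdd_above (range (\<lambda>pl. Vpi Phat ?r H pl h x))"
      using Vbnd by (intro bdd_aboveI2[where M="real (H - h)"]) auto
    then have "Vpi Phat ?r H pl h x \<le> Vopt Phat ?r H h x" unfolding Vopt_def by (rule cSUP_upper[OF UNIV_I])
    then show ?thesis using Vopt_hat by simp
  qed
  have greedy: "Qpi Phat ?r H pihat h x b \<le> Vpi Phat ?r H pihat h x" if "h < H" for h x b
  proof -
    define pl where "pl = pihat(h := (\<lambda>_. b))"
    have "Vpi Phat ?r H pl (Suc h) y = Vpi Phat ?r H pihat (Suc h) y" for y
      by (rule Vpi_agree) (simp add: pl_def)
    then have "Vpi Phat ?r H pl h x = Qpi Phat ?r H pihat h x b"
      using that by (simp add: Vpi_lt Qpi_def pl_def)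
    then show ?thesis using Vle_hat[of pl h x] by simp
  qed
  have Vle_til: "Vpi Ptil Rt H pl h x \<le> Vpi Ptil Rt H pihat h x" for pl h x
  proof (induction "H - h" arbitrary: h x rule: less_induct)
    case less
    show ?case
    proof (cases "h < H")
      case True
      have ih: "Vpi Ptil Rt H pl (Suc h) y \<le> Vpi Ptil Rt H pihat (Suc h) y" for y
        using True by (intro less.hyps) auto
      define b where "b = pl h x"
      have "Vpi Ptil Rt H pl h x = Rt h x b + (\<Sum>y\<in>UNIV. Ptil x b y * Vpi Ptil Rt H pl (Suc h) y)"
        using True by (simp add: Vpi_lt b_def)
      also have "\<dots> \<le> Rt h x b + (\<Sum>y\<in>UNIV. Ptil x b y * Vpi Ptil Rt H pihat (Suc h) y)"
        using ih Ptil_nn by (simp add: sum_mono mult_left_mono)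
      also have "\<dots> = Qpi Phat ?r H pihat h x b"
        using Qeq[of pihat h] unfolding Rt_def ustar_eq Qpi_def by (metis Veq)
      also have "\<dots> \<le> Vpi Phat ?r H pihat h x" using greedy True by simp
      also have "\<dots> = Vpi Ptil Rt H pihat h x" unfolding Rt_def ustar_eq by (rule Veq)
      finally show ?thesis .
    qed (simp add: Vpi_ge)
  qed
  have c1: "Qpi Phat ?r H pol h = Qpi Ptil (Rtil upi) H pol h" for h
    using Qeq[of pol h] unfolding upi_def uof_def by simp
  have c2: "Qopt Phat ?r H h = Qpi Ptil (Rtil ustar) H pihat h" for h
  proof -
    have "Qopt Phat ?r H h x b = Qpi Phat ?r H pihat h x b" for x b
    proof -
      have le: "Qpi Phat ?r H pl h x b \<le> Qpi Phat ?r H pihat h x b" for pl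
        unfolding Qpi_def using Vle_hat Phat_nn by (simp add: sum_mono mult_left_mono)
      have "(SUP pl. Qpi Phat ?r H pl h x b) = Qpi Phat ?r H pihat h x b"
        by (rule antisym, rule cSUP_least, simp, rule le, rule cSUP_upper, simp,
            rule bdd_aboveI2, rule le)
      then show ?thesis unfolding Qopt_def .
    qed
    then show ?thesis unfolding ustar_eq Qeq[symmetric] by (intro ext)
  qed
  have c3: "Qpi Ptil (Rtil ustar) H pihat h = Qopt Ptil (Rtil ustar) H h" for h
  proof (intro ext)
    fix x b
    have le: "Qpi Ptil Rt H pl h x b \<le> Qpi Ptil Rt H pihat h x b" for pl
      unfolding Qpi_def using Vle_til Ptil_nn by (simp add: sum_mono mult_left_mono)
    have "(SUP pl. Qpi Ptil Rt H pl h x b) = Qpi Ptil Rt H pihat h x b"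
      by (rule antisym, rule cSUP_least, simp, rule le, rule cSUP_upper, simp,
          rule bdd_aboveI2, rule le)
    then show "Qpi Ptil (Rtil ustar) H pihat h x b = Qopt Ptil (Rtil ustar) H h x b"
      unfolding Qopt_def Rt_def by simp
  qed
  have ubnd: "\<bar>uof pl h\<bar> \<le> real H - real h - 1" if "h < H" for pl h
  proof -
    let ?V = "Vpi Phat ?r H pl (Suc h)"
    let ?B = "real (H - Suc h)"
    have B: "?B = real H - real h - 1" using that by simp
    have s1: "0 \<le> (\<Sum>y\<in>UNIV. PhatK j y * ?V y) \<and> (\<Sum>y\<in>UNIV. PhatK j y * ?V y) \<le> ?B"
    proof
      show "0 \<le> (\<Sum>y\<in>UNIV. PhatK j y * ?V y)" using Vbnd PhK_nn by (simp add: sum_nonneg)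
      have "(\<Sum>y\<in>UNIV. PhatK j y * ?V y) \<le> (\<Sum>y\<in>UNIV. PhatK j y * ?B)"
        using Vbnd PhK_nn by (simp add: sum_mono mult_left_mono)
      also have "\<dots> = ?B" using PhK_sum by (simp add: sum_distrib_right[symmetric])
      finally show "(\<Sum>y\<in>UNIV. PhatK j y * ?V y) \<le> ?B" .
    qed
    have s2: "0 \<le> (\<Sum>y\<in>UNIV. P s a y * ?V y) \<and> (\<Sum>y\<in>UNIV. P s a y * ?V y) \<le> ?B"
    proof
      show "0 \<le> (\<Sum>y\<in>UNIV. P s a y * ?V y)" using Vbnd P_nonneg by (simp add: sum_nonneg)
      have "(\<Sum>y\<in>UNIV. P s a y * ?V y) \<le> (\<Sum>y\<in>UNIV. P s a y * ?B)"
        using Vbnd P_nonneg by (simp add: sum_mono mult_left_mono)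
      also have "\<dots> = ?B" using P_sum by (simp add: sum_distrib_right[symmetric])
      finally show "(\<Sum>y\<in>UNIV. P s a y * ?V y) \<le> ?B" .
    qed
    have "uof pl h = (\<Sum>y\<in>UNIV. PhatK j y * ?V y) - (\<Sum>y\<in>UNIV. P s a y * ?V y)"
      unfolding uof_def by (simp add: left_diff_distrib sum_subtractf)
    then show ?thesis using s1 s2 B by linarith
  qed
  show ?thesis using c1 c2 c3 ubnd[of _ pol] ubnd[of _ pihat]
    unfolding upi_def ustar_eq by (simp add: uof_def)
qed

end
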